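(* For every Polish group $G$, there is an $F_\sigma$ subgroup $H\subseteq G^\omega$ such that every $K_\sigma$ subgroup $K$ of $G^\omega$ is a continuous homomorphic pre-image of $H$, i.e., there is a continuous group homomorphism $\varphi:G^\omega\to G^\omega$ with $\varphi^{-1}(H)=K$.
   Context: $G^\omega$ carries the product topology. A $K_\sigma$ set is a countable union of compact sets. *)

theory Defs
  imports "HOL-Analysis.Analysis" "HOL-Library.Function_Algebras"
begin

definition subgroup_add :: "'a::group_add set \<Rightarrow> bool" where
  "subgroup_add H \<longleftrightarrow> 0 \<in> H \<and> (\<forall>x\<in>H. \<forall>y\<in>H. x + y \<in> H) \<and> (\<forall>x\<in>H. - x \<in> H)"

definition ksigma :: "'a::topological_space set \<Rightarrow> bool" where
  "ksigma S \<longleftrightarrow> (countable union_of compact) S"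

end

theory Submission imports Defs begin

lemma sep_metr_second_countable:
  assumes "metrizable_space X" "separable_space X" shows "second_countable X"
proof -
  obtain M d where md: "Metric_space M d" and X: "X = Metric_space.mtopology M d"
    using assms(1) unfolding metrizable_space_def by blast
  interpret Metric_space M d by (rule md)
  obtain C where C: "countable C" "C \<subseteq> M" "mtopology closure_of C = M"
    using assms(2) unfolding separable_space_def X by auto
  define B where "B = (\<lambda>(c,n::nat). mball c (inverse (Suc n))) ` (C \<times> UNIV)"
  have "countable B" unfolding B_def using C(1) by auto
  moreover have "\<forall>V\<in>B. openin mtopology V" unfolding B_def by auto
  moreover have "\<exists>V\<in>B. x \<in> V \<and> V \<subseteq> U" if oU: "openin mtopology U" and xU: "x \<in> U" for U x
  proof -
    have U: "U \<subseteq> M \<and> (\<forall>x. x \<in> U \<longrightarrow> (\<exists>r>0. mball x r \<subseteq> U))"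
      using oU openin_mtopology by simp
    obtain r where r: "r > 0" "mball x r \<subseteq> U" "x \<in> M"
      using U xU by blast
    obtain n::nat where n: "inverse (Suc n) < r / 2"
      using r(1) reals_Archimedean[of "r/2"] by auto
    have "x \<in> mtopology closure_of C" using C(3) r(3) by simp
    then have "\<forall>e>0. \<exists>y\<in>C. y \<in> mball x e"
      unfolding metric_closure_of by blast
    moreover have "(0::real) < inverse (Suc n)" by simp
    ultimately obtain c where c: "c \<in> C" "c \<in> mball x (inverse (Suc n))"
      by blast
    have "mball c (inverse (Suc n)) \<subseteq> mball x r"
    proof (rule mball_subset)
      show "d c x + inverse (real (Suc n)) \<le> r" using c n commute[of c x] by auto
    qed (use r in auto)
    moreover have "x \<in> mball c (inverse (Suc n))" using c by (simp add: commute)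
    moreover have "mball c (inverse (Suc n)) \<in> B" unfolding B_def using c by auto
    ultimately show ?thesis using r by blast
  qed
  ultimately show ?thesis unfolding second_countable_def X by blast
qed


lemma fun_countable_base:
  fixes dummy :: "'a::topological_space"
  assumes "second_countable (euclidean::'a topology)"
  obtains BB :: "(nat \<Rightarrow> 'a) set set" where "countable BB" "\<forall>V\<in>BB. open V"
    "\<And>U x. open U \<Longrightarrow> x \<in> U \<Longrightarrow> \<exists>V\<in>BB. x \<in> V \<and> V \<subseteq> U"
proof -
  obtain B :: "'a set set" where B: "countable B" "\<forall>V\<in>B. open V"
    "\<And>U x. open U \<Longrightarrow> x \<in> U \<Longrightarrow> \<exists>V\<in>B. x \<in> V \<and> V \<subseteq> U"
    using assms unfolding second_countable_def by (metis open_openin)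
  define B2 where "B2 = B \<union> {UNIV}"
  have "countable B2" unfolding B2_def using B by auto
  have oB2: "open U" if "U \<in> B2" for U
    using that unfolding B2_def using B by auto
  define K where "K = {Pi\<^sub>E UNIV X | X. (\<forall>i::nat. X i \<in> B2) \<and> finite {i. X i \<noteq> UNIV}}"
  have "countable {X. (\<forall>(i::nat). X i \<in> B2) \<and> finite {i. X i \<noteq> UNIV}}"
    using \<open>countable B2\<close>  by (intro countable_product_event_const) auto
  moreover have "K = (\<lambda>X. Pi\<^sub>E UNIV X)`{X. (\<forall>i. X i \<in> B2) \<and> finite {i. X i \<noteq> UNIV}}"
    unfolding K_def by auto
  ultimately have ii: "countable K" by auto
  have i: "\<forall>V\<in>K. open V"
    unfolding K_def using oB2 by (auto intro!: open_PiE)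
  have iii: "\<exists>V\<in>K. x \<in> V \<and> V \<subseteq> U" if "open U" "x \<in> U" for U and x::"nat\<Rightarrow>'a"
  proof -
    have "openin (product_topology (\<lambda>i. euclidean) UNIV) U"
      using that unfolding open_fun_def by auto
    with product_topology_open_contains_basis[OF this \<open>x \<in> U\<close>]
    obtain X where H: "x \<in> (\<Pi>\<^sub>E i\<in>UNIV. X i)"
                           "\<And>i. open (X i)"
                           "finite {i. X i \<noteq> UNIV}"
                           "(\<Pi>\<^sub>E i\<in>UNIV. X i) \<subseteq> U"
      by auto
    then have "x i \<in> X i" for i by auto
    define I where "I = {i. X i \<noteq> UNIV}"
    define Y where "Y = (\<lambda>i. if i \<in> I then (SOME y. y \<in> B2 \<and> y \<subseteq> X i \<and> x i \<in> y) else UNIV)"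
    have *: "\<exists>y. y \<in> B2 \<and> y \<subseteq> X i \<and> x i \<in> y" for i
      unfolding B2_def using B(3)[OF \<open>open (X i)\<close> \<open>x i \<in> X i\<close>] by blast
    have **: "Y i \<in> B2 \<and> Y i \<subseteq> X i \<and> x i \<in> Y i" for i
      using someI_ex[OF *] by (simp add: B2_def I_def Y_def)
    have "{i. Y i \<noteq> UNIV} \<subseteq> I"
      unfolding Y_def by auto
    then have "(\<forall>i. Y i \<in> B2) \<and> finite {i. Y i \<noteq> UNIV}"
      using "**" H(3) I_def finite_subset by blast
    then have "Pi\<^sub>E UNIV Y \<in> K"
      unfolding K_def by auto
    then show "\<exists>V\<in>K. x \<in> V \<and> V \<subseteq> U"
      by (meson "**" H(4) PiE_I PiE_mono UNIV_I order.trans)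
  qed
  show ?thesis by (rule that[OF ii i]) (use iii in blast)
qed

lemma fun_regular:
  assumes "metrizable_space (euclidean::'a::topological_space topology)"
  shows "regular_space (euclidean::(nat\<Rightarrow>'a) topology)"
proof -
  have "regular_space (product_topology (\<lambda>i. (euclidean::'a topology)) (UNIV::nat set))"
    unfolding regular_space_product_topology
    using metrizable_imp_regular_space[OF assms] by simp
  then show ?thesis by (simp add: euclidean_product_topology)
qed

lemma fun_closed_singleton:
  assumes "metrizable_space (euclidean::'a::topological_space topology)"
  shows "closed {z::nat\<Rightarrow>'a}"
proof -
  have "Hausdorff_space (euclidean::(nat\<Rightarrow>'a) topology)"
  proof -
    have "Hausdorff_space (product_topology (\<lambda>i. (euclidean::'a topology)) (UNIV::nat set))"
      unfolding Hausdorff_space_product_topology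
      using metrizable_imp_Hausdorff_space[OF assms] by simp
    then show ?thesis by (simp add: euclidean_product_topology)
  qed
  then have t1: "t1_space (euclidean::(nat\<Rightarrow>'a) topology)" by (rule Hausdorff_imp_t1_space)
  have "closedin euclidean {z}" by (rule closedin_t1_singleton[OF t1]) simp
  then show ?thesis by (simp only: closed_closedin)
qed

lemma regular_shrink:
  fixes W :: "'b::topological_space set"
  assumes "regular_space (euclidean::'b::topological_space topology)" "open W" "x \<in> W"
  obtains V where "open V" "x \<in> V" "closure V \<subseteq> W"
proof -
  have c: "closedin euclidean (- W)" using assms(2) closed_closedin closed_Compl by blast
  have x: "x \<in> topspace euclidean - (- W)" using assms(3) by simp
  have R: "\<forall>(C::'b set) a. closedin euclidean C \<and> a \<in> topspace euclidean - C
                \<longrightarrow> (\<exists>U V. openin euclidean U \<and> openin euclidean V \<and> a \<in> U \<and> C \<subseteq> V \<and> disjnt U V)"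
    using assms(1) unfolding regular_space_def by assumption
  obtain U V where UV: "openin euclidean U" "openin euclidean V" "x \<in> U" "- W \<subseteq> V" "disjnt U V"
    using R[rule_format, of "-W" x] c x by blast
  have oU: "open U" using UV(1) open_openin by blast
  have oV: "open V" using UV(2) open_openin by blast
  have "U \<subseteq> - V" using UV(5) unfolding disjnt_def by blast
  moreover have "closed (- V)" using oV by (simp add: closed_Compl)
  ultimately have "closure U \<subseteq> - V" by (rule closure_minimal)
  then have "closure U \<subseteq> W" using UV(4) by blast
  then show ?thesis using that oU UV(3) by blast
qed


lemma open_vimage_UNIV: "continuous_on UNIV f \<Longrightarrow> open B \<Longrightarrow> open (f -` B)"
  using continuous_on_open_vimage[OF open_UNIV, of f] by auto

lemma closed_vimage_UNIV: "continuous_on UNIV f \<Longrightarrow> closed B \<Longrightarrow> closed (f -` B)"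
proof -
  assume c: "continuous_on UNIV f" and B: "closed B"
  have "\<forall>B. closed B \<longrightarrow> closed (f -` B \<inter> UNIV)"
    using continuous_on_closed_vimage[OF closed_UNIV, of f] c by blast
  then have "closed (f -` B \<inter> UNIV)" using B by blast
  then show ?thesis by (simp only: Int_UNIV_right)
qed

lemma contadd_fun:
  assumes "continuous_on UNIV (\<lambda>p::'a::{topological_space,group_add} \<times> 'a. fst p + snd p)"
  shows "continuous_on UNIV (\<lambda>p::(nat\<Rightarrow>'a) \<times> (nat\<Rightarrow>'a). fst p + snd p)"
proof (rule continuous_on_coordinatewise_then_product)
  fix i
  have c: "continuous_on UNIV (\<lambda>p::(nat\<Rightarrow>'a) \<times> (nat\<Rightarrow>'a). (fst p i, snd p i))"
  proof (rule continuous_on_Pair)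
    show "continuous_on UNIV (\<lambda>p::(nat\<Rightarrow>'a) \<times> (nat\<Rightarrow>'a). fst p i)"
      by (rule continuous_on_compose2[OF continuous_on_product_coordinates[of i] continuous_on_fst[OF continuous_on_id]]) simp
    show "continuous_on UNIV (\<lambda>p::(nat\<Rightarrow>'a) \<times> (nat\<Rightarrow>'a). snd p i)"
      by (rule continuous_on_compose2[OF continuous_on_product_coordinates[of i] continuous_on_snd[OF continuous_on_id]]) simp
  qed
  have "continuous_on UNIV ((\<lambda>p::'a \<times> 'a. fst p + snd p) \<circ> (\<lambda>p::(nat\<Rightarrow>'a) \<times> (nat\<Rightarrow>'a). (fst p i, snd p i)))"
    by (rule continuous_on_compose[OF c]) (rule continuous_on_subset[OF assms], simp)
  then show "continuous_on UNIV (\<lambda>p::(nat\<Rightarrow>'a) \<times> (nat\<Rightarrow>'a). (fst p + snd p) i)"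
    by (simp add: o_def)
qed

lemma contneg_fun:
  assumes "continuous_on UNIV (uminus :: 'a::{topological_space,group_add} \<Rightarrow> 'a)"
  shows "continuous_on UNIV (uminus :: (nat\<Rightarrow>'a) \<Rightarrow> (nat\<Rightarrow>'a))"
proof (rule continuous_on_coordinatewise_then_product)
  fix i
  have "continuous_on UNIV ((uminus :: 'a \<Rightarrow> 'a) \<circ> (\<lambda>p::(nat\<Rightarrow>'a). p i))"
    by (rule continuous_on_compose[OF continuous_on_product_coordinates])
       (rule continuous_on_subset[OF assms], simp)
  then show "continuous_on UNIV (\<lambda>p::(nat\<Rightarrow>'a). (- p) i)"
    by (simp add: o_def)
qed

lemma compact_setsum:
  fixes A :: "'b::{topological_space,group_add} set"
  assumes "continuous_on UNIV (\<lambda>p::'b \<times> 'b. fst p + snd p)" "compact A"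
  shows "compact ((\<lambda>p. fst p + snd p) ` (A \<times> A))"
  by (rule compact_continuous_image[OF continuous_on_subset[OF assms(1)] compact_Times[OF assms(2) assms(2)]]) simp

lemma compact_setneg:
  fixes A :: "'b::{topological_space,group_add} set"
  assumes "continuous_on UNIV (uminus :: 'b \<Rightarrow> 'b)" "compact A"
  shows "compact (uminus ` A)"
  by (rule compact_continuous_image[OF continuous_on_subset[OF assms(1)] assms(2)]) simp

lemma group_nbhd:
  fixes A Ob :: "'b::{topological_space,group_add} set"
  assumes ca: "continuous_on UNIV (\<lambda>p::'b \<times> 'b. fst p + snd p)"
    and cn: "continuous_on UNIV (uminus :: 'b \<Rightarrow> 'b)"
    and A: "compact A" and Ob: "open Ob"
    and s: "\<forall>x\<in>A. \<forall>y\<in>A. x + y \<in> Ob" and n: "\<forall>x\<in>A. - x \<in> Ob" and AO: "A \<subseteq> Ob"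
  shows "\<exists>W. open W \<and> A \<subseteq> W \<and> (\<forall>x\<in>W. \<forall>y\<in>W. x + y \<in> Ob) \<and> (\<forall>x\<in>W. - x \<in> Ob) \<and> W \<subseteq> Ob"
proof -
  define P where "P = (\<lambda>p::'b \<times> 'b. fst p + snd p) -` Ob"
  have "open P" unfolding P_def by (rule open_vimage_UNIV[OF ca Ob])
  then have "openin euclidean P" using open_openin by blast
  then have oP: "openin (prod_topology euclidean euclidean) P" by (simp only: prod_topology_euclidean)
  have sub: "A \<times> A \<subseteq> P" unfolding P_def using s by auto
  have cA: "compactin euclidean A" using A by (simp only: compactin_euclidean_iff)
  obtain U V where UV: "openin euclidean U" "openin euclidean V" "A \<subseteq> U" "A \<subseteq> V" "U \<times> V \<subseteq> P"
    using Wallace_theorem_prod_topology[OF cA cA oP sub] by blast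
  define W where "W = U \<inter> V \<inter> (uminus -` Ob) \<inter> Ob"
  have "open U" "open V" using UV(1,2) open_openin by blast+
  then have "open W" unfolding W_def using open_vimage_UNIV[OF cn Ob] Ob
    by (intro open_Int)
  moreover have "A \<subseteq> W" unfolding W_def using UV(3,4) n AO by auto
  moreover have "\<forall>x\<in>W. \<forall>y\<in>W. x + y \<in> Ob"
  proof (intro ballI)
    fix x y assume "x \<in> W" "y \<in> W"
    then have "(x, y) \<in> P" using UV(5) unfolding W_def by blast
    then show "x + y \<in> Ob" unfolding P_def by simp
  qed
  moreover have "\<forall>x\<in>W. - x \<in> Ob" unfolding W_def by auto
  moreover have "W \<subseteq> Ob" unfolding W_def by auto
  ultimately show ?thesis by blast
qed


locale chainsetup =
  fixes BB :: "'b::{topological_space,group_add} set set"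
  assumes BBc: "countable BB" and BBo: "\<forall>V\<in>BB. open V"
    and BBb: "\<And>U x. open U \<Longrightarrow> x \<in> U \<Longrightarrow> \<exists>V\<in>BB. x \<in> V \<and> V \<subseteq> U"
    and reg: "regular_space (euclidean::'b topology)"
    and ca: "continuous_on UNIV (\<lambda>p::'b \<times> 'b. fst p + snd p)"
    and cn: "continuous_on UNIV (uminus :: 'b \<Rightarrow> 'b)"
begin

definition FS where "FS = {F. finite F \<and> F \<subseteq> BB}"

definition chain_of :: "'b set set list \<Rightarrow> nat \<Rightarrow> 'b set" where
  "chain_of Fs n = (if n < length Fs then closure (\<Union>(Fs!n)) else UNIV)"

definition adm :: "(nat \<Rightarrow> 'b set) \<Rightarrow> bool" where
  "adm C \<longleftrightarrow> (\<forall>n. closed (C n)) \<and> 0 \<in> C 0 \<and> (\<forall>n. \<forall>x\<in>C n. \<forall>y\<in>C n. x + y \<in> C (Suc n))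
     \<and> (\<forall>n. \<forall>x\<in>C n. - x \<in> C (Suc n))"

definition DD where "DD = {chain_of Fs | Fs. Fs \<in> lists FS \<and> adm (chain_of Fs)}"

lemma countable_DD: "countable DD"
proof -
  have "countable FS" unfolding FS_def by (rule countable_Collect_finite_subset[OF BBc])
  then have "countable (lists FS)" by (rule countable_lists)
  moreover have "DD \<subseteq> chain_of ` lists FS" unfolding DD_def by blast
  ultimately show ?thesis by (meson countable_image countable_subset)
qed

lemma adm_zero: "adm C \<Longrightarrow> 0 \<in> C n"
proof (induction n)
  case 0 then show ?case unfolding adm_def by blast
next
  case (Suc n)
  then have "0 + 0 \<in> C (Suc n)" unfolding adm_def by blast
  then show ?case by simp
qed

lemma adm_mono1: "adm C \<Longrightarrow> C n \<subseteq> C (Suc n)"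
proof
  fix x assume a: "adm C" and x: "x \<in> C n"
  have "0 \<in> C n" by (rule adm_zero[OF a])
  then have "x + 0 \<in> C (Suc n)" using a x unfolding adm_def by blast
  then show "x \<in> C (Suc n)" by simp
qed

lemma adm_mono: "adm C \<Longrightarrow> n \<le> m \<Longrightarrow> C n \<subseteq> C m"
proof (induction m)
  case 0 then show ?case by simp
next
  case (Suc m)
  show ?case
  proof (cases "n \<le> m")
    case True
    then show ?thesis using Suc adm_mono1[OF Suc.prems(1), of m] by blast
  next
    case False
    then have "n = Suc m" using Suc.prems(2) by simp
    then show ?thesis by simp
  qed
qed

lemma closure_fin_Union:
  assumes "finite F" "\<forall>b\<in>F. closure b \<subseteq> W"
  shows "closure (\<Union>F) \<subseteq> W"
proof -
  have "closed (\<Union>(closure ` F))" using assms(1) by (intro closed_Union) auto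
  moreover have "\<Union>F \<subseteq> \<Union>(closure ` F)" using closure_subset by blast
  ultimately have "closure (\<Union>F) \<subseteq> \<Union>(closure ` F)" by (rule closure_minimal[rotated])
  then show ?thesis using assms(2) by blast
qed

lemma shrink:
  assumes "compact A" "open W" "A \<subseteq> W"
  shows "\<exists>F\<in>FS. A \<subseteq> \<Union>F \<and> closure (\<Union>F) \<subseteq> W"
proof -
  define CC where "CC = {b \<in> BB. closure b \<subseteq> W}"
  have cov: "A \<subseteq> \<Union>CC"
  proof
    fix x assume "x \<in> A"
    then have "x \<in> W" using assms(3) by blast
    then obtain V where V: "open V" "x \<in> V" "closure V \<subseteq> W"
      using regular_shrink[OF reg assms(2)] by blast
    then obtain b where b: "b \<in> BB" "x \<in> b" "b \<subseteq> V" using BBb by blast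
    then have "closure b \<subseteq> W" using V(3) closure_mono by blast
    then show "x \<in> \<Union>CC" using b unfolding CC_def by blast
  qed
  have "\<forall>b\<in>CC. open b" using BBo unfolding CC_def by blast
  then obtain F where F: "F \<subseteq> CC" "finite F" "A \<subseteq> \<Union>F"
    using compactE[OF assms(1) cov] by metis
  have "F \<in> FS" using F unfolding FS_def CC_def by blast
  moreover have "closure (\<Union>F) \<subseteq> W"
    using closure_fin_Union[OF F(2)] F(1) unfolding CC_def by blast
  ultimately show ?thesis using F(3) by blast
qed


lemma chain_build:
  fixes A :: "nat \<Rightarrow> 'b set"
  assumes cA: "\<And>m. compact (A m)"
    and sA: "\<And>m. \<forall>x\<in>A m. \<forall>y\<in>A m. x + y \<in> A (Suc m)"
    and nA: "\<And>m. \<forall>x\<in>A m. - x \<in> A (Suc m)"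
    and iA: "\<And>m. A m \<subseteq> A (Suc m)"
  shows "open W \<Longrightarrow> A n \<subseteq> W \<Longrightarrow> \<exists>Fs. length Fs = Suc n \<and> set Fs \<subseteq> FS \<and> (\<forall>m\<le>n. A m \<subseteq> \<Union>(Fs!m))
     \<and> closure (\<Union>(Fs!n)) \<subseteq> W
     \<and> (\<forall>m<n. (\<forall>x\<in>closure (\<Union>(Fs!m)). \<forall>y\<in>closure (\<Union>(Fs!m)). x + y \<in> \<Union>(Fs!Suc m))
             \<and> (\<forall>x\<in>closure (\<Union>(Fs!m)). - x \<in> \<Union>(Fs!Suc m)))"
proof (induction n arbitrary: W)
  case 0
  obtain F where F: "F \<in> FS" "A 0 \<subseteq> \<Union>F" "closure (\<Union>F) \<subseteq> W"
    using shrink[OF cA 0(1) 0(2)] by blast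
  show ?case
    by (rule exI[of _ "[F]"]) (use F in auto)
next
  case (Suc n)
  obtain F where F: "F \<in> FS" "A (Suc n) \<subseteq> \<Union>F" "closure (\<Union>F) \<subseteq> W"
    using shrink[OF cA Suc.prems(1) Suc.prems(2)] by blast
  have oF: "open (\<Union>F)" using F(1) BBo unfolding FS_def by blast
  have "\<exists>W'. open W' \<and> A n \<subseteq> W' \<and> (\<forall>x\<in>W'. \<forall>y\<in>W'. x + y \<in> \<Union>F) \<and> (\<forall>x\<in>W'. - x \<in> \<Union>F) \<and> W' \<subseteq> \<Union>F"
  proof (rule group_nbhd[OF ca cn cA oF])
    show "\<forall>x\<in>A n. \<forall>y\<in>A n. x + y \<in> \<Union>F" using sA[of n] F(2) by blast
    show "\<forall>x\<in>A n. - x \<in> \<Union>F" using nA[of n] F(2) by blast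
    show "A n \<subseteq> \<Union>F" using iA[of n] F(2) by blast
  qed
  then obtain W' where W': "open W'" "A n \<subseteq> W'" "\<forall>x\<in>W'. \<forall>y\<in>W'. x + y \<in> \<Union>F"
    "\<forall>x\<in>W'. - x \<in> \<Union>F" by blast
  obtain Fs where Fs: "length Fs = Suc n" "set Fs \<subseteq> FS" "\<forall>m\<le>n. A m \<subseteq> \<Union>(Fs!m)"
     "closure (\<Union>(Fs!n)) \<subseteq> W'"
     "\<forall>m<n. (\<forall>x\<in>closure (\<Union>(Fs!m)). \<forall>y\<in>closure (\<Union>(Fs!m)). x + y \<in> \<Union>(Fs!Suc m))
             \<and> (\<forall>x\<in>closure (\<Union>(Fs!m)). - x \<in> \<Union>(Fs!Suc m))"
    using Suc.IH[OF W'(1) W'(2)] by blast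
  define Gs where "Gs = Fs @ [F]"
  have G1: "Gs ! m = Fs ! m" if "m \<le> n" for m
    unfolding Gs_def using that Fs(1) by (simp add: nth_append)
  have G2: "Gs ! Suc n = F" unfolding Gs_def using Fs(1) by (simp add: nth_append)
  have "length Gs = Suc (Suc n)" unfolding Gs_def using Fs(1) by simp
  moreover have "set Gs \<subseteq> FS" unfolding Gs_def using Fs(2) F(1) by simp
  moreover have "\<forall>m\<le>Suc n. A m \<subseteq> \<Union>(Gs!m)"
  proof (intro allI impI)
    fix m assume "m \<le> Suc n"
    then consider "m \<le> n" | "m = Suc n" by linarith
    then show "A m \<subseteq> \<Union>(Gs!m)"
    proof cases
      case 1 then show ?thesis using G1 Fs(3) by simp
    next
      case 2 then show ?thesis using G2 F(2) by simp
    qed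
  qed
  moreover have "closure (\<Union>(Gs!Suc n)) \<subseteq> W" using G2 F(3) by simp
  moreover have "\<forall>m<Suc n. (\<forall>x\<in>closure (\<Union>(Gs!m)). \<forall>y\<in>closure (\<Union>(Gs!m)). x + y \<in> \<Union>(Gs!Suc m))
             \<and> (\<forall>x\<in>closure (\<Union>(Gs!m)). - x \<in> \<Union>(Gs!Suc m))"
  proof (intro allI impI)
    fix m assume "m < Suc n"
    then consider "m < n" | "m = n" by linarith
    then show "(\<forall>x\<in>closure (\<Union>(Gs!m)). \<forall>y\<in>closure (\<Union>(Gs!m)). x + y \<in> \<Union>(Gs!Suc m))
             \<and> (\<forall>x\<in>closure (\<Union>(Gs!m)). - x \<in> \<Union>(Gs!Suc m))"
    proof cases
      case 1
      then have "Gs ! m = Fs ! m" "Gs ! Suc m = Fs ! Suc m" using G1 by simp_all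
      then show ?thesis using Fs(5) 1 by simp
    next
      case 2
      then have "Gs ! m = Fs ! n" "Gs ! Suc m = F" using G1 G2 by simp_all
      then show ?thesis using Fs(4) W'(3,4) by (metis subsetD)
    qed
  qed
  ultimately show ?case by blast
qed

lemma chain_adm:
  assumes "length Fs = Suc n" "set Fs \<subseteq> FS" "0 \<in> \<Union>(Fs!0)"
     "\<forall>m<n. (\<forall>x\<in>closure (\<Union>(Fs!m)). \<forall>y\<in>closure (\<Union>(Fs!m)). x + y \<in> \<Union>(Fs!Suc m))
             \<and> (\<forall>x\<in>closure (\<Union>(Fs!m)). - x \<in> \<Union>(Fs!Suc m))"
  shows "chain_of Fs \<in> DD"
proof -
  have "adm (chain_of Fs)"
    unfolding adm_def
  proof (intro conjI allI ballI)
    fix m show "closed (chain_of Fs m)" unfolding chain_of_def by simp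
  next
    have "chain_of Fs 0 = closure (\<Union>(Fs!0))" unfolding chain_of_def using assms(1) by simp
    then show "0 \<in> chain_of Fs 0" using assms(3) closure_subset[of "\<Union>(Fs!0)"] by blast
  next
    fix m x y assume x: "x \<in> chain_of Fs m" and y: "y \<in> chain_of Fs m"
    show "x + y \<in> chain_of Fs (Suc m)"
    proof (cases "m < n")
      case True
      then have "x \<in> closure (\<Union>(Fs!m))" "y \<in> closure (\<Union>(Fs!m))"
        using x y assms(1) unfolding chain_of_def by auto
      then have "x + y \<in> \<Union>(Fs!Suc m)" using assms(4) True by blast
      moreover have "chain_of Fs (Suc m) = closure (\<Union>(Fs!Suc m))" unfolding chain_of_def using True assms(1) by simp
      ultimately show ?thesis using closure_subset[of "\<Union>(Fs!Suc m)"] by blast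
    next
      case False
      then show ?thesis unfolding chain_of_def using assms(1) by auto
    qed
  next
    fix m x assume x: "x \<in> chain_of Fs m"
    show "- x \<in> chain_of Fs (Suc m)"
    proof (cases "m < n")
      case True
      then have "x \<in> closure (\<Union>(Fs!m))"
        using x assms(1) unfolding chain_of_def by auto
      then have "- x \<in> \<Union>(Fs!Suc m)" using assms(4) True by blast
      moreover have "chain_of Fs (Suc m) = closure (\<Union>(Fs!Suc m))" unfolding chain_of_def using True assms(1) by simp
      ultimately show ?thesis using closure_subset[of "\<Union>(Fs!Suc m)"] by blast
    next
      case False
      then show ?thesis unfolding chain_of_def using assms(1) by auto
    qed
  qed
  then show ?thesis unfolding DD_def using assms(2) by blast
qed

end


theorem mainTheorem2:
  assumes "completely_metrizable_space (euclidean :: 'a::{topological_space, group_add} topology)"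
    and "separable_space (euclidean :: 'a topology)"
    and "continuous_on UNIV (\<lambda>p::'a \<times> 'a. fst p + snd p)"
    and "continuous_on UNIV (uminus :: 'a \<Rightarrow> 'a)"
  shows "\<exists>H :: (nat \<Rightarrow> 'a) set. subgroup_add H \<and> fsigma_in euclidean H \<and>
           (\<forall>K :: (nat \<Rightarrow> 'a) set. subgroup_add K \<and> ksigma K \<longrightarrow>
              (\<exists>\<phi> :: (nat \<Rightarrow> 'a) \<Rightarrow> (nat \<Rightarrow> 'a).
                  continuous_on UNIV \<phi> \<and> (\<forall>x y. \<phi> (x + y) = \<phi> x + \<phi> y) \<and> \<phi> -` H = K))"
proof -
  have metr: "metrizable_space (euclidean :: 'a topology)"
    using assms(1) by (rule completely_metrizable_imp_metrizable_space)
  have sc: "second_countable (euclidean :: 'a topology)"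
    using sep_metr_second_countable[OF metr assms(2)] .
  obtain BB :: "(nat \<Rightarrow> 'a) set set" where BB: "countable BB" "\<forall>V\<in>BB. open V"
    "\<And>U x. open U \<Longrightarrow> x \<in> U \<Longrightarrow> \<exists>V\<in>BB. x \<in> V \<and> V \<subseteq> U"
    using fun_countable_base[OF sc] by blast
  interpret chainsetup BB
  proof
    show "countable BB" "\<forall>V\<in>BB. open V" by (fact BB(1)) (fact BB(2))
    show "\<And>U x. open U \<Longrightarrow> x \<in> U \<Longrightarrow> \<exists>V\<in>BB. x \<in> V \<and> V \<subseteq> U" by (fact BB(3))
    show "regular_space (euclidean::(nat\<Rightarrow>'a) topology)" by (rule fun_regular[OF metr])
    show "continuous_on UNIV (\<lambda>p::(nat\<Rightarrow>'a) \<times> (nat\<Rightarrow>'a). fst p + snd p)"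
      by (rule contadd_fun[OF assms(3)])
    show "continuous_on UNIV (uminus :: (nat\<Rightarrow>'a) \<Rightarrow> (nat\<Rightarrow>'a))"
      by (rule contneg_fun[OF assms(4)])
  qed
  have "adm (chain_of [])" unfolding adm_def chain_of_def by simp
  then have "chain_of [] \<in> DD" unfolding DD_def by auto
  then have DDne: "DD \<noteq> {}" by blast
  define e where "e = from_nat_into DD"
  have eDD: "e j \<in> DD" for j unfolding e_def using from_nat_into[OF DDne] .
  have esurj: "\<exists>j. e j = C" if "C \<in> DD" for C
    unfolding e_def using from_nat_into_surj[OF countable_DD that] .
  have eadm: "adm (e j)" for j using eDD[of j] unfolding DD_def by auto
  define slot :: "(nat\<Rightarrow>'a) \<Rightarrow> nat \<Rightarrow> (nat\<Rightarrow>'a)" where "slot y j = (\<lambda>i. y (prod_encode (j,i)))" for y j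
  have slot_add: "slot (y + z) j = slot y j + slot z j" for y z j
    unfolding slot_def by (simp add: plus_fun_def)
  have slot_neg: "slot (- y) j = - slot y j" for y j
    unfolding slot_def by (simp add: fun_Compl_def)
  have slot_zero: "slot 0 j = 0" for j
    unfolding slot_def by (simp add: zero_fun_def)
  have slot_cont: "continuous_on UNIV (\<lambda>y. slot y j)" for j
    unfolding slot_def by (intro continuous_on_coordinatewise_then_product continuous_on_product_coordinates)
  define Hn where "Hn n = {y. \<forall>j. slot y j \<in> e j n}" for n
  define H where "H = (\<Union>n. Hn n)"
  have Hmono: "Hn n \<subseteq> Hn m" if "n \<le> m" for n m
    unfolding Hn_def using adm_mono[OF eadm that] by blast
  have sub: "subgroup_add H"
    unfolding subgroup_add_def
  proof (intro conjI ballI)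
    have "0 \<in> Hn 0" unfolding Hn_def using adm_zero[OF eadm] slot_zero by simp
    then show "0 \<in> H" unfolding H_def by blast
  next
    fix y z assume "y \<in> H" "z \<in> H"
    then obtain n1 n2 where "y \<in> Hn n1" "z \<in> Hn n2" unfolding H_def by blast
    then have "y \<in> Hn (max n1 n2)" "z \<in> Hn (max n1 n2)" using Hmono by (meson max.cobounded1 max.cobounded2 subsetD)+
    then have "y + z \<in> Hn (Suc (max n1 n2))"
      unfolding Hn_def using eadm slot_add unfolding adm_def by simp
    then show "y + z \<in> H" unfolding H_def by blast
  next
    fix y assume "y \<in> H"
    then obtain n where "y \<in> Hn n" unfolding H_def by blast
    then have "- y \<in> Hn (Suc n)"
      unfolding Hn_def using eadm slot_neg unfolding adm_def by simp
    then show "- y \<in> H" unfolding H_def by blast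
  qed
  have Hn_closed: "closed (Hn n)" for n
  proof -
    have eq: "Hn n = (\<Inter>j. (\<lambda>y. slot y j) -` e j n)" unfolding Hn_def by blast
    have "closed (e j n)" for j using eadm[of j] unfolding adm_def by blast
    then have c: "closed ((\<lambda>y. slot y j) -` e j n)" for j by (rule closed_vimage_UNIV[OF slot_cont])
    have "closed (\<Inter>j. (\<lambda>y. slot y j) -` e j n)" by (rule closed_INT) (use c in blast)
    then show ?thesis by (simp only: eq)
  qed
  have fs: "fsigma_in euclidean H"
    unfolding fsigma_in_def union_of_def
  proof (intro exI conjI)
    show "countable (range Hn)" by simp
    show "range Hn \<subseteq> Collect (closedin euclidean)" using Hn_closed closed_closedin by blast
    show "\<Union>(range Hn) = H" unfolding H_def by simp
  qed
  have main: "\<exists>\<phi> :: (nat \<Rightarrow> 'a) \<Rightarrow> (nat \<Rightarrow> 'a).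
                  continuous_on UNIV \<phi> \<and> (\<forall>x y. \<phi> (x + y) = \<phi> x + \<phi> y) \<and> \<phi> -` H = K"
    if K: "subgroup_add K" "ksigma K" for K
  proof -
    obtain UU where UU: "countable UU" "UU \<subseteq> Collect compact" "\<Union>UU = K"
      using K(2) unfolding ksigma_def union_of_def by blast
    define Kc where "Kc i = (if UU = {} then {} else from_nat_into UU i)" for i
    have Kc_comp: "compact (Kc i)" for i
      unfolding Kc_def using from_nat_into[of UU i] UU(2) by auto
    have Kc_cov: "\<exists>i. x \<in> Kc i" if xK: "x \<in> K" for x
    proof -
      obtain U where U: "U \<in> UU" "x \<in> U" using xK UU(3) by blast
      then obtain i where "from_nat_into UU i = U" using from_nat_into_surj[OF UU(1)] by blast
      then show ?thesis using U unfolding Kc_def by auto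
    qed
    have Kc_sub: "Kc i \<subseteq> K" for i
      unfolding Kc_def using from_nat_into[of UU i] UU(3) by auto
    define A where "A = rec_nat ({0} \<union> Kc 0) (\<lambda>m S. (\<lambda>p. fst p + snd p) ` (S \<times> S) \<union> uminus ` S \<union> Kc (Suc m))"
    have A0: "A 0 = {0} \<union> Kc 0" unfolding A_def by simp
    have AS: "A (Suc m) = (\<lambda>p. fst p + snd p) ` (A m \<times> A m) \<union> uminus ` A m \<union> Kc (Suc m)" for m
      unfolding A_def by simp
    have cA: "compact (A m)" for m
    proof (induction m)
      case 0 then show ?case unfolding A0 using Kc_comp by (intro compact_Un) auto
    next
      case (Suc m) then show ?case unfolding AS using Kc_comp
        by (intro compact_Un compact_setsum[OF ca] compact_setneg[OF cn])
    qed
    have sA: "\<forall>x\<in>A m. \<forall>y\<in>A m. x + y \<in> A (Suc m)" for m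
      unfolding AS by force
    have nA: "\<forall>x\<in>A m. - x \<in> A (Suc m)" for m
      unfolding AS by blast
    have zA: "0 \<in> A m" for m
    proof (induction m)
      case 0 then show ?case unfolding A0 by blast
    next
      case (Suc m) then have "0 + 0 \<in> A (Suc m)" using sA by blast
      then show ?case by (simp only: add_0_left)
    qed
    have iA: "A m \<subseteq> A (Suc m)" for m
    proof
      fix x assume "x \<in> A m"
      then have "x + 0 \<in> A (Suc m)" using sA zA by blast
      then show "x \<in> A (Suc m)" by (simp only: add_0_right)
    qed
    have AK: "A m \<subseteq> K" for m
    proof (induction m)
      case 0 then show ?case unfolding A0 using Kc_sub K(1) unfolding subgroup_add_def by blast
    next
      case (Suc m)
      have Kadd: "\<forall>x\<in>K. \<forall>y\<in>K. x + y \<in> K" using K(1) unfolding subgroup_add_def by blast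
      have "(\<lambda>p. fst p + snd p) ` (A m \<times> A m) \<subseteq> K"
      proof
        fix z assume "z \<in> (\<lambda>p. fst p + snd p) ` (A m \<times> A m)"
        then obtain a b where "a \<in> A m" "b \<in> A m" "z = a + b" by auto
        then show "z \<in> K" using Suc.IH Kadd by blast
      qed
      moreover have "uminus ` A m \<subseteq> K" using Suc K(1) unfolding subgroup_add_def by auto
      ultimately show ?case unfolding AS using Kc_sub by blast
    qed
    have KA: "\<exists>n. x \<in> A n" if xK: "x \<in> K" for x
    proof -
      obtain i where "x \<in> Kc i" using Kc_cov[OF xK] by blast
      moreover have "Kc i \<subseteq> A i"
      proof (cases i)
        case 0 then show ?thesis using A0 by blast
      next
        case (Suc m) then show ?thesis using AS[of m] by blast
      qed
      ultimately show ?thesis by blast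
    qed
    define T where "T = {j. \<forall>m. A m \<subseteq> e j m}"
    define \<phi> :: "(nat \<Rightarrow> 'a) \<Rightarrow> (nat \<Rightarrow> 'a)" where
      "\<phi> x = (\<lambda>k. if fst (prod_decode k) \<in> T then x (snd (prod_decode k)) else 0)" for x
    have slot_phi: "slot (\<phi> x) j = (if j \<in> T then x else 0)" for x j
      unfolding slot_def \<phi>_def by (auto simp: zero_fun_def)
    have cphi: "continuous_on UNIV \<phi>"
      unfolding \<phi>_def
    proof (rule continuous_on_coordinatewise_then_product)
      fix k
      show "continuous_on UNIV (\<lambda>x::nat\<Rightarrow>'a. if fst (prod_decode k) \<in> T then x (snd (prod_decode k)) else 0)"
        by (cases "fst (prod_decode k) \<in> T") (simp_all add: continuous_on_const)
    qed
    have aphi: "\<forall>x y. \<phi> (x + y) = \<phi> x + \<phi> y"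
      unfolding \<phi>_def by (auto simp: plus_fun_def)
    have "\<phi> -` H = K"
    proof
      show "\<phi> -` H \<subseteq> K"
      proof
        fix x assume "x \<in> \<phi> -` H"
        then obtain n where n: "\<forall>j. slot (\<phi> x) j \<in> e j n" unfolding H_def Hn_def by blast
        show "x \<in> K"
        proof (rule ccontr)
          assume "x \<notin> K"
          then have xA: "x \<notin> A n" using AK by blast
          have oW: "open (- {x})" using fun_closed_singleton[OF metr] by (simp add: open_Compl)
          have AW: "A n \<subseteq> - {x}" using xA by blast
          obtain Fs where Fs: "length Fs = Suc n" "set Fs \<subseteq> FS" "\<forall>m\<le>n. A m \<subseteq> \<Union>(Fs!m)"
             "closure (\<Union>(Fs!n)) \<subseteq> - {x}"
             "\<forall>m<n. (\<forall>x\<in>closure (\<Union>(Fs!m)). \<forall>y\<in>closure (\<Union>(Fs!m)). x + y \<in> \<Union>(Fs!Suc m))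
                     \<and> (\<forall>x\<in>closure (\<Union>(Fs!m)). - x \<in> \<Union>(Fs!Suc m))"
            using chain_build[OF cA sA nA iA oW AW] by blast
          have "0 \<in> \<Union>(Fs!0)" using Fs(3) zA[of 0] by blast
          then have "chain_of Fs \<in> DD" using chain_adm[OF Fs(1) Fs(2) _ Fs(5)] by blast
          then obtain j where j: "e j = chain_of Fs" using esurj by blast
          have "A m \<subseteq> chain_of Fs m" for m
          proof (cases "m \<le> n")
            case True
            then have "chain_of Fs m = closure (\<Union>(Fs!m))" unfolding chain_of_def using Fs(1) by simp
            moreover have "A m \<subseteq> \<Union>(Fs!m)" using Fs(3) True by blast
            ultimately show ?thesis using closure_subset[of "\<Union>(Fs!m)"] by (simp only:)
          next
            case False
            then show ?thesis unfolding chain_of_def using Fs(1) by simp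
          qed
          then have "j \<in> T" unfolding T_def using j by simp
          then have "x \<in> e j n" using n slot_phi by metis
          moreover have "e j n = closure (\<Union>(Fs!n))" using j Fs(1) unfolding chain_of_def by simp
          ultimately show False using Fs(4) by blast
        qed
      qed
    next
      show "K \<subseteq> \<phi> -` H"
      proof
        fix x assume "x \<in> K"
        then obtain n where xn: "x \<in> A n" using KA by blast
        have "slot (\<phi> x) j \<in> e j n" for j
        proof (cases "j \<in> T")
          case True then show ?thesis using slot_phi xn unfolding T_def by auto
        next
          case False then show ?thesis using slot_phi adm_zero[OF eadm] by simp
        qed
        then show "x \<in> \<phi> -` H" unfolding H_def Hn_def by blast
      qed
    qed
    then show ?thesis using cphi aphi by blast
  qed
  show ?thesis using sub fs main by blast
qed

end
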